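(* Let $T$ be an $n$-simplex with vertices $\texttt v_0,\dots,\texttt v_n$, let $m\ge0$ and $k\ge 2m+1$, and let $i\in\{0,\dots,n\}$. Then the space $$\mathbb P_k(D(\texttt v_i,m))=\mathrm{span}\Big\{\lambda^\alpha:\alpha\in\mathbb T^n_k,\ \sum_{j\ne i}\alpha_j\le m\Big\}$$ is uniquely determined by the values $D^\beta u(\texttt v_i)$, $\beta\in\mathbb N^n$, $|\beta|\le m$; that is, the linear map $u\mapsto (D^\beta u(\texttt v_i))_{|\beta|\le m}$ is a bijection from this space onto $\mathbb R^{N}$ with $N=\#\{\beta\in\mathbb N^n:|\beta|\le m\}$.
   Context: $\lambda_0,\dots,\lambda_n$ are the barycentric coordinates of $T$; $\mathbb N$ includes $0$; $\mathbb T^n_k=\{\alpha\in\mathbb N^{n+1}:\sum_j\alpha_j=k\}$; $\lambda^\alpha=\prod_j\lambda_j^{\alpha_j}$; $D^\beta=\partial^{|\beta|}/\partial x_1^{\beta_1}\cdots\partial x_n^{\beta_n}$. *)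

theory Defs
  imports "HOL-Analysis.Analysis"
begin

text \<open>Points of R^n are represented as functions nat => real; only the
coordinates 0..n-1 are relevant (coordinates >= n are ignored throughout).\<close>

definition simplex_vertices :: "nat \<Rightarrow> (nat \<Rightarrow> nat \<Rightarrow> real) \<Rightarrow> bool" where
  "simplex_vertices n v \<longleftrightarrow>
     (\<forall>c::nat \<Rightarrow> real. (\<Sum>l\<le>n. c l) = 0 \<and> (\<forall>d<n. (\<Sum>l\<le>n. c l * v l d) = 0)
        \<longrightarrow> (\<forall>l\<le>n. c l = 0))"

definition bary :: "nat \<Rightarrow> (nat \<Rightarrow> nat \<Rightarrow> real) \<Rightarrow> nat \<Rightarrow> (nat \<Rightarrow> real) \<Rightarrow> real" where
  "bary n v j x = (THE c::nat \<Rightarrow> real. (\<forall>l>n. c l = 0) \<and> (\<Sum>l\<le>n. c l) = 1 \<and>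
        (\<forall>d<n. (\<Sum>l\<le>n. c l * v l d) = x d)) j"

definition bary_monomial :: "nat \<Rightarrow> (nat \<Rightarrow> nat \<Rightarrow> real) \<Rightarrow> (nat \<Rightarrow> nat) \<Rightarrow> (nat \<Rightarrow> real) \<Rightarrow> real" where
  "bary_monomial n v \<alpha> x = (\<Prod>j\<le>n. bary n v j x ^ \<alpha> j)"

definition Tset :: "nat \<Rightarrow> nat \<Rightarrow> (nat \<Rightarrow> nat) set" where
  "Tset n k = {\<alpha>. (\<forall>j>n. \<alpha> j = 0) \<and> (\<Sum>j\<le>n. \<alpha> j) = k}"

text \<open>P_k(D(v_i,m)) = span {lambda^alpha : alpha in T^n_k, sum_{j<>i} alpha_j <= m}
  (the index set is finite, so the span is the set of linear combinations).\<close>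
definition PkD :: "nat \<Rightarrow> (nat \<Rightarrow> nat \<Rightarrow> real) \<Rightarrow> nat \<Rightarrow> nat \<Rightarrow> nat \<Rightarrow> ((nat \<Rightarrow> real) \<Rightarrow> real) set" where
  "PkD n v k i m =
     {u. \<exists>c::(nat \<Rightarrow> nat) \<Rightarrow> real.
          u = (\<lambda>x. \<Sum>\<alpha>\<in>{\<alpha>\<in>Tset n k. (\<Sum>j\<in>{..n}-{i}. \<alpha> j) \<le> m}. c \<alpha> * bary_monomial n v \<alpha> x)}"

text \<open>Partial derivative with respect to the coordinate x_(d+1) (0-based index d).\<close>
definition partial :: "nat \<Rightarrow> ((nat \<Rightarrow> real) \<Rightarrow> real) \<Rightarrow> (nat \<Rightarrow> real) \<Rightarrow> real" where
  "partial d u x = deriv (\<lambda>t. u (x(d := x d + t))) 0"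

definition Dmulti :: "nat \<Rightarrow> (nat \<Rightarrow> nat) \<Rightarrow> ((nat \<Rightarrow> real) \<Rightarrow> real) \<Rightarrow> (nat \<Rightarrow> real) \<Rightarrow> real" where
  "Dmulti n \<beta> u = foldr (\<lambda>d f. (partial d ^^ \<beta> d) f) [0..<n] u"

definition Bset :: "nat \<Rightarrow> nat \<Rightarrow> (nat \<Rightarrow> nat) set" where
  "Bset n m = {\<beta>. (\<forall>d\<ge>n. \<beta> d = 0) \<and> (\<Sum>d<n. \<beta> d) \<le> m}"

end

theory Submission
  imports Defs "Jordan_Normal_Form.Determinant" "HOL-Library.Multiset"
begin

lemma solv: fixes A :: "real mat"
  assumes A: "A \<in> carrier_mat N N" and inj: "\<And>c. c \<in> carrier_vec N \<Longrightarrow> A *\<^sub>v c = 0\<^sub>v N \<Longrightarrow> c = 0\<^sub>v N"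
    and b: "b \<in> carrier_vec N"
  shows "\<exists>c\<in>carrier_vec N. A *\<^sub>v c = b"
proof -
  have "Determinant.det A \<noteq> 0" using det_0_iff_vec_prod_zero[OF A] inj by auto
  from det_non_zero_imp_unit[OF A this, of "()"] obtain B where B: "B \<in> carrier_mat N N" "A * B = 1\<^sub>m N"
    unfolding Units_def by (auto simp: ring_mat_def)
  show ?thesis
    apply (rule bexI[of _ "B *\<^sub>v b"])
    using B A b by (auto simp: assoc_mult_mat_vec[symmetric])
qed

lemma simplexD:
  assumes s: "simplex_vertices n v" and h0: "(\<Sum>l\<le>n. c l) = 0"
    and h1: "\<forall>d<n. (\<Sum>l\<le>n. c l * v l d) = 0" and l: "l \<le> n"
  shows "c l = 0"
proof -
  have "\<forall>c::nat \<Rightarrow> real. (\<Sum>l\<le>n. c l) = 0 \<and> (\<forall>d<n. (\<Sum>l\<le>n. c l * v l d) = 0) \<longrightarrow> (\<forall>l\<le>n. c l = 0)"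
    using s unfolding simplex_vertices_def .
  then have "(\<Sum>l\<le>n. c l) = 0 \<and> (\<forall>d<n. (\<Sum>l\<le>n. c l * v l d) = 0) \<longrightarrow> (\<forall>l\<le>n. c l = 0)"
    by (rule spec)
  then show ?thesis using h0 h1 l by simp
qed

definition bsys :: "nat \<Rightarrow> (nat \<Rightarrow> nat \<Rightarrow> real) \<Rightarrow> (nat \<Rightarrow> real) \<Rightarrow> (nat \<Rightarrow> real) \<Rightarrow> bool" where
  "bsys n v x c \<longleftrightarrow> (\<forall>l>n. c l = 0) \<and> (\<Sum>l\<le>n. c l) = 1 \<and> (\<forall>d<n. (\<Sum>l\<le>n. c l * v l d) = x d)"

lemma bsys_unique:
  assumes s: "simplex_vertices n v" and c: "bsys n v x c" and c': "bsys n v x c'"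
  shows "c = c'"
proof (rule ext)
  fix l
  let ?f = "\<lambda>l. c l - c' l"
  have h0: "(\<Sum>l\<le>n. ?f l) = 0" using c c' by (simp add: bsys_def sum_subtractf)
  have h1: "\<forall>d<n. (\<Sum>l\<le>n. ?f l * v l d) = 0" using c c'
    by (simp add: bsys_def sum_subtractf left_diff_distrib)
  have "\<forall>l\<le>n. ?f l = 0" using simplexD[OF s h0 h1] by simp
  then show "c l = c' l" using c c' by (cases "l \<le> n") (auto simp: bsys_def)
qed

lemma bsys_exists:
  assumes s: "simplex_vertices n v"
  shows "\<exists>c. bsys n v x c"
proof -
  define A :: "real mat" where "A = mat (Suc n) (Suc n) (\<lambda>(r,l). if r = 0 then 1 else v l (r - 1))"
  have A: "A \<in> carrier_mat (Suc n) (Suc n)" by (simp add: A_def)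
  have Av: "(A *\<^sub>v c) $ r = (\<Sum>l\<le>n. (if r = 0 then 1 else v l (r-1)) * c $ l)"
    if "c \<in> carrier_vec (Suc n)" "r < Suc n" for c r
    using that unfolding A_def
    by (simp add: scalar_prod_def atLeast0LessThan lessThan_Suc_atMost)
  have inj: "c = 0\<^sub>v (Suc n)" if c: "c \<in> carrier_vec (Suc n)" and z: "A *\<^sub>v c = 0\<^sub>v (Suc n)" for c
  proof -
    define f where "f l = (if l \<le> n then c $ l else 0)" for l
    have h0: "(\<Sum>l\<le>n. f l) = 0"
      using Av[OF c, of 0] z by (simp add: f_def)
    have h1: "\<forall>d<n. (\<Sum>l\<le>n. f l * v l d) = 0"
    proof (intro allI impI)
      fix d assume "d < n"
      then have "(A *\<^sub>v c) $ Suc d = 0" using z by simp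
      then show "(\<Sum>l\<le>n. f l * v l d) = 0" using Av[OF c, of "Suc d"] \<open>d < n\<close>
        by (simp add: f_def mult.commute)
    qed
    have "\<forall>l\<le>n. f l = 0" using simplexD[OF s h0 h1] by simp
    then show ?thesis using c by (intro eq_vecI) (auto simp: f_def)
  qed
  define b :: "real vec" where "b = vec (Suc n) (\<lambda>r. if r = 0 then 1 else x (r - 1))"
  have b: "b \<in> carrier_vec (Suc n)" by (simp add: b_def)
  obtain c where c: "c \<in> carrier_vec (Suc n)" and cb: "A *\<^sub>v c = b" using solv[OF A inj b] by blast
  define f where "f l = (if l \<le> n then c $ l else 0)" for l
  have "bsys n v x f"
    unfolding bsys_def
  proof (intro conjI allI impI)
    show "(\<Sum>l\<le>n. f l) = 1" using Av[OF c, of 0] cb by (simp add: f_def b_def)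
    fix d assume "d < n"
    then show "(\<Sum>l\<le>n. f l * v l d) = x d" using Av[OF c, of "Suc d"] cb
      by (simp add: f_def b_def mult.commute)
  qed (simp add: f_def)
  then show ?thesis by blast
qed

lemma bary_eq:
  assumes s: "simplex_vertices n v" and c: "bsys n v x c"
  shows "bary n v j x = c j"
proof -
  have "(THE c. bsys n v x c) = c"
    by (rule the_equality[where P="bsys n v x", OF c]) (rule bsys_unique[OF s _ c])
  moreover have "bary n v j x = (THE c. bsys n v x c) j" unfolding bary_def bsys_def by (rule refl)
  ultimately show ?thesis by simp
qed

lemma bary_bsys:
  assumes s: "simplex_vertices n v"
  shows "bsys n v x (\<lambda>j. bary n v j x)"
proof -
  obtain c where c: "bsys n v x c" using bsys_exists[OF s] by blast
  have "(\<lambda>j. bary n v j x) = c" using bary_eq[OF s c] by auto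
  then show ?thesis using c by simp
qed

lemma mult_delta: "(if P then 1 else 0) * (y::real) = (if P then y else 0)" by simp

lemma bary_vertex:
  assumes s: "simplex_vertices n v" and l: "l \<le> n"
  shows "bary n v j (v l) = (if j = l then 1 else 0)"
proof -
  have "bsys n v (v l) (\<lambda>j. if j = l then 1 else 0)"
    using l by (auto simp: bsys_def mult_delta)
  from bary_eq[OF s this] show ?thesis .
qed

definition bA :: "nat \<Rightarrow> (nat \<Rightarrow> nat \<Rightarrow> real) \<Rightarrow> nat \<Rightarrow> real" where
  "bA n v j = bary n v j (\<lambda>_. 0)"
definition bB :: "nat \<Rightarrow> (nat \<Rightarrow> nat \<Rightarrow> real) \<Rightarrow> nat \<Rightarrow> nat \<Rightarrow> real" where
  "bB n v j d = bary n v j (\<lambda>d'. if d' = d then 1 else 0) - bary n v j (\<lambda>_. 0)"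

lemma bary_affine:
  assumes s: "simplex_vertices n v"
  shows "bary n v j x = bA n v j + (\<Sum>d<n. bB n v j d * x d)"
proof -
  define c0 where "c0 j = bary n v j (\<lambda>_. 0)" for j
  define ce where "ce d j = bary n v j (\<lambda>d'. if d' = d then 1 else 0)" for d j
  have b0: "bsys n v (\<lambda>_. 0) c0" unfolding c0_def using bary_bsys[OF s] .
  have be: "bsys n v (\<lambda>d'. if d' = d then 1 else 0) (ce d)" for d unfolding ce_def using bary_bsys[OF s] .
  define cand where "cand j = c0 j + (\<Sum>d<n. (ce d j - c0 j) * x d)" for j
  have "bsys n v x cand"
    unfolding bsys_def
  proof (intro conjI allI impI)
    fix l assume "n < l" then show "cand l = 0" using b0 be by (simp add: cand_def bsys_def)
  next
    have "(\<Sum>l\<le>n. cand l) = (\<Sum>l\<le>n. c0 l) + (\<Sum>d<n. ((\<Sum>l\<le>n. ce d l) - (\<Sum>l\<le>n. c0 l)) * x d)"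
      unfolding cand_def sum.distrib
      by (subst sum.swap) (simp add: sum_distrib_right sum_subtractf left_diff_distrib)
    also have "\<dots> = 1" using b0 be by (simp add: bsys_def)
    finally show "(\<Sum>l\<le>n. cand l) = 1" .
  next
    fix d' assume d': "d' < n"
    have e1: "(\<Sum>l\<le>n. (\<Sum>d<n. (ce d l - c0 l) * x d) * v l d') = (\<Sum>d<n. (\<Sum>l\<le>n. (ce d l - c0 l) * v l d') * x d)"
      unfolding sum_distrib_right
      by (subst sum.swap) (intro sum.cong refl, simp add: mult_ac)
    have "(\<Sum>l\<le>n. cand l * v l d') = (\<Sum>l\<le>n. c0 l * v l d') + (\<Sum>l\<le>n. (\<Sum>d<n. (ce d l - c0 l) * x d) * v l d')"
      by (simp add: cand_def distrib_right sum.distrib)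
    also have "\<dots> = (\<Sum>l\<le>n. c0 l * v l d') + (\<Sum>d<n. ((\<Sum>l\<le>n. ce d l * v l d') - (\<Sum>l\<le>n. c0 l * v l d')) * x d)"
      unfolding e1 by (simp add: sum_subtractf left_diff_distrib)
    also have "\<dots> = (\<Sum>d<n. (if d' = d then 1 else 0) * x d)" using b0 be d' by (simp add: bsys_def)
    also have "\<dots> = x d'" using d' by (simp add: mult_delta)
    finally show "(\<Sum>l\<le>n. cand l * v l d') = x d'" .
  qed
  from bary_eq[OF s this] show ?thesis
    by (simp add: cand_def bA_def bB_def c0_def ce_def mult.commute)
qed

inductive polyC :: "nat \<Rightarrow> ((nat \<Rightarrow> real) \<Rightarrow> real) \<Rightarrow> bool" for n where
  aff: "polyC n (\<lambda>x. a + (\<Sum>d<n. b d * x d))"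
| add: "polyC n u \<Longrightarrow> polyC n w \<Longrightarrow> polyC n (\<lambda>x. u x + w x)"
| mul: "polyC n u \<Longrightarrow> polyC n w \<Longrightarrow> polyC n (\<lambda>x. u x * w x)"

lemma polyC_const: "polyC n (\<lambda>x. a)"
  using polyC.aff[of n a "\<lambda>_. 0"] by simp

lemma aff_shift:
  fixes x :: "nat \<Rightarrow> real"
  shows
  "(\<lambda>t. a + (\<Sum>d'<n. b d' * (x(d := x d + t)) d')) =
   (\<lambda>t. (a + (\<Sum>d'<n. b d' * x d')) + (if d < n then b d else 0) * t)"
proof
  fix t
  have "(\<Sum>d'<n. b d' * (x(d := x d + t)) d') = (\<Sum>d'<n. b d' * x d' + (if d' = d then b d * t else 0))"
    by (rule sum.cong) (auto simp: algebra_simps)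
  also have "\<dots> = (\<Sum>d'<n. b d' * x d') + (if d < n then b d else 0) * t"
    by (simp add: sum.distrib)
  finally show "a + (\<Sum>d'<n. b d' * (x(d := x d + t)) d') = (a + (\<Sum>d'<n. b d' * x d')) + (if d < n then b d else 0) * t"
    by simp
qed

lemma polyC_deriv:
  "polyC n u \<Longrightarrow> \<exists>u'. polyC n u' \<and> (\<forall>x. ((\<lambda>t. u (x(d := x d + t))) has_real_derivative u' x) (at 0))"
proof (induction rule: polyC.induct)
  case (aff a b)
  show ?case
  proof (intro exI conjI allI)
    show "polyC n (\<lambda>x. if d < n then b d else 0)" by (rule polyC_const)
    fix x
    show "((\<lambda>t. a + (\<Sum>d'<n. b d' * (x(d := x d + t)) d')) has_real_derivative (if d < n then b d else 0)) (at 0)"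
      unfolding aff_shift by (auto intro!: derivative_eq_intros)
  qed
next
  case (add u w)
  then obtain u' w' where u': "polyC n u'" "\<forall>x. ((\<lambda>t. u (x(d := x d + t))) has_real_derivative u' x) (at 0)"
    and w': "polyC n w'" "\<forall>x. ((\<lambda>t. w (x(d := x d + t))) has_real_derivative w' x) (at 0)" by blast
  show ?case
  proof (intro exI conjI allI)
    show "polyC n (\<lambda>x. u' x + w' x)" using u' w' by (auto intro!: polyC.add)
    fix x
    show "((\<lambda>t. u (x(d := x d + t)) + w (x(d := x d + t))) has_real_derivative u' x + w' x) (at 0)"
      using DERIV_add[OF u'(2)[rule_format, of x] w'(2)[rule_format, of x]] .
  qed
next
  case (mul u w)
  then obtain u' w' where u': "polyC n u'" "\<forall>x. ((\<lambda>t. u (x(d := x d + t))) has_real_derivative u' x) (at 0)"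
    and w': "polyC n w'" "\<forall>x. ((\<lambda>t. w (x(d := x d + t))) has_real_derivative w' x) (at 0)" by blast
  show ?case
  proof (intro exI conjI allI)
    show "polyC n (\<lambda>x. u' x * w x + w' x * u x)"
      using u' w' mul.hyps by (auto intro!: polyC.add polyC.mul)
    fix x
    show "((\<lambda>t. u (x(d := x d + t)) * w (x(d := x d + t))) has_real_derivative u' x * w x + w' x * u x) (at 0)"
      using DERIV_mult[OF u'(2)[rule_format, of x] w'(2)[rule_format, of x]] by simp
  qed
qed

lemma partial_eqI:
  assumes "\<And>x. ((\<lambda>t. u (x(d := x d + t))) has_real_derivative u' x) (at 0)"
  shows "partial d u = u'"
  using assms by (auto simp: partial_def fun_eq_iff intro: DERIV_imp_deriv)

lemma polyC_partial_deriv: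
  assumes "polyC n u"
  shows "((\<lambda>t. u (x(d := x d + t))) has_real_derivative partial d u x) (at 0)"
proof -
  obtain u' where "polyC n u'" "\<forall>x. ((\<lambda>t. u (x(d := x d + t))) has_real_derivative u' x) (at 0)"
    using polyC_deriv[OF assms] by blast
  moreover from this have "partial d u = u'" by (intro partial_eqI) auto
  ultimately show ?thesis by simp
qed

lemma polyC_partial: assumes "polyC n u" shows "polyC n (partial d u)"
proof -
  obtain u' where "polyC n u'" "\<forall>x. ((\<lambda>t. u (x(d := x d + t))) has_real_derivative u' x) (at 0)"
    using polyC_deriv[OF assms] by blast
  moreover from this have "partial d u = u'" by (intro partial_eqI) auto
  ultimately show ?thesis by simp
qed

lemma partial_add: "polyC n u \<Longrightarrow> polyC n w \<Longrightarrow> partial d (\<lambda>x. u x + w x) = (\<lambda>x. partial d u x + partial d w x)"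
  by (rule partial_eqI) (auto intro!: DERIV_add polyC_partial_deriv)

lemma partial_mul: "polyC n u \<Longrightarrow> polyC n w \<Longrightarrow> partial d (\<lambda>x. u x * w x) = (\<lambda>x. partial d u x * w x + u x * partial d w x)"
proof (rule partial_eqI)
  fix x assume u: "polyC n u" and w: "polyC n w"
  show "((\<lambda>t. u (x(d := x d + t)) * w (x(d := x d + t))) has_real_derivative partial d u x * w x + u x * partial d w x) (at 0)"
    using DERIV_mult[OF polyC_partial_deriv[OF u, of x d] polyC_partial_deriv[OF w, of x d]]
    by (simp add: mult.commute)
qed

lemma partial_aff: "partial d (\<lambda>x. a + (\<Sum>d'<n. b d' * x d')) = (\<lambda>x. if d < n then b d else 0)"
  by (rule partial_eqI) (unfold aff_shift, auto intro!: derivative_eq_intros)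

lemma partial_const: "partial d (\<lambda>x. a) = (\<lambda>x. 0)"
  by (rule partial_eqI) (auto intro!: derivative_eq_intros)

lemma partial_comm: "polyC n u \<Longrightarrow> partial d (partial e u) = partial e (partial d u)"
proof (induction rule: polyC.induct)
  case (aff a b)
  then show ?case by (simp add: partial_aff partial_const)
next
  case (add u w)
  have "partial d (partial e (\<lambda>x. u x + w x)) = partial d (\<lambda>x. partial e u x + partial e w x)"
    using add.hyps by (simp add: partial_add)
  also have "\<dots> = (\<lambda>x. partial d (partial e u) x + partial d (partial e w) x)"
    by (rule partial_add[OF polyC_partial[OF add.hyps(1)] polyC_partial[OF add.hyps(2)]])
  also have "\<dots> = (\<lambda>x. partial e (partial d u) x + partial e (partial d w) x)" using add.IH by simp
  also have "\<dots> = partial e (\<lambda>x. partial d u x + partial d w x)"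
    by (rule partial_add[OF polyC_partial[OF add.hyps(1)] polyC_partial[OF add.hyps(2)], symmetric])
  also have "\<dots> = partial e (partial d (\<lambda>x. u x + w x))"
    using add.hyps by (simp add: partial_add)
  finally show ?case .
next
  case (mul u w)
  have g: "partial d (partial e (\<lambda>x. u x * w x)) = (\<lambda>x. partial d (partial e u) x * w x + partial e u x * partial d w x + (partial d u x * partial e w x + u x * partial d (partial e w) x))"
    if u: "polyC n u" and w: "polyC n w" for d e u w
  proof -
    have "partial d (partial e (\<lambda>x. u x * w x)) = partial d (\<lambda>x. partial e u x * w x + u x * partial e w x)"
      using u w by (simp add: partial_mul)
    also have "\<dots> = (\<lambda>x. partial d (\<lambda>x. partial e u x * w x) x + partial d (\<lambda>x. u x * partial e w x) x)"
      by (rule partial_add[OF polyC.mul[OF polyC_partial[OF u] w] polyC.mul[OF u polyC_partial[OF w]]])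
    also have "\<dots> = (\<lambda>x. partial d (partial e u) x * w x + partial e u x * partial d w x + (partial d u x * partial e w x + u x * partial d (partial e w) x))"
      by (simp add: partial_mul[OF polyC_partial[OF u] w] partial_mul[OF u polyC_partial[OF w]])
    finally show ?thesis .
  qed
  have "partial d (partial e (\<lambda>x. u x * w x)) = (\<lambda>x. partial d (partial e u) x * w x + partial e u x * partial d w x + (partial d u x * partial e w x + u x * partial d (partial e w) x))"
    using g[OF mul.hyps] .
  moreover have "partial e (partial d (\<lambda>x. u x * w x)) = (\<lambda>x. partial e (partial d u) x * w x + partial d u x * partial e w x + (partial e u x * partial d w x + u x * partial e (partial d w) x))"
    using g[OF mul.hyps] .
  ultimately show ?case using mul.IH by (simp add: algebra_simps)
qed

lemma partial_scal: assumes u: "polyC n u" shows "partial d (\<lambda>x. a * u x) = (\<lambda>x. a * partial d u x)"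
  using partial_mul[OF polyC_const[of n a] u, of d] by (simp add: partial_const)

lemma polyC_scal: assumes u: "polyC n u" shows "polyC n (\<lambda>x. a * u x)"
  using polyC.mul[OF polyC_const[of n a] u] by simp

lemma partial_lin: assumes u: "polyC n u" and w: "polyC n w" shows
  "partial d (\<lambda>x. a * u x + b * w x) = (\<lambda>x. a * partial d u x + b * partial d w x)"
  using partial_add[OF polyC_scal[OF u, of a] polyC_scal[OF w, of b], of d]
  by (simp add: partial_scal[OF u] partial_scal[OF w])

lemma polyC_iter: "polyC n u \<Longrightarrow> polyC n ((partial d ^^ k) u)"
  by (induction k) (auto simp: polyC_partial)

lemma polyC_foldr: "polyC n u \<Longrightarrow> polyC n (foldr (\<lambda>d f. (partial d ^^ \<beta> d) f) ds u)"
  by (induction ds) (auto simp: polyC_iter)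

lemma polyC_Dmulti: "polyC n u \<Longrightarrow> polyC n (Dmulti n \<beta> u)"
  unfolding Dmulti_def by (rule polyC_foldr)

lemma iter_lin: assumes u: "polyC n u" and w: "polyC n w" shows
  "(partial d ^^ k) (\<lambda>x. a * u x + b * w x) = (\<lambda>x. a * (partial d ^^ k) u x + b * (partial d ^^ k) w x)"
  by (induction k) (simp_all add: partial_lin[OF polyC_iter[OF u] polyC_iter[OF w]])

lemma foldr_lin: assumes u: "polyC n u" and w: "polyC n w" shows "
  foldr (\<lambda>d f. (partial d ^^ \<beta> d) f) ds (\<lambda>x. a * u x + b * w x) =
  (\<lambda>x. a * foldr (\<lambda>d f. (partial d ^^ \<beta> d) f) ds u x + b * foldr (\<lambda>d f. (partial d ^^ \<beta> d) f) ds w x)"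
  by (induction ds) (simp_all add: iter_lin[OF polyC_foldr[OF u] polyC_foldr[OF w]])

lemma Dmulti_lin: "polyC n u \<Longrightarrow> polyC n w \<Longrightarrow>
  Dmulti n \<beta> (\<lambda>x. a * u x + b * w x) = (\<lambda>x. a * Dmulti n \<beta> u x + b * Dmulti n \<beta> w x)"
  unfolding Dmulti_def by (rule foldr_lin) auto

lemma Dmulti_zero: "Dmulti n \<beta> (\<lambda>x. 0) = (\<lambda>x. 0)"
  using Dmulti_lin[OF polyC_const polyC_const, where a=0 and b=0 and \<beta>=\<beta> and n=n] by simp

lemma polyC_sum: "finite S \<Longrightarrow> (\<And>\<alpha>. \<alpha> \<in> S \<Longrightarrow> polyC n (f \<alpha>)) \<Longrightarrow> polyC n (\<lambda>x. \<Sum>\<alpha>\<in>S. c \<alpha> * f \<alpha> x)"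
proof (induction S rule: finite_induct)
  case empty
  then show ?case using polyC_const[of n 0] by simp
next
  case (insert a S)
  then show ?case by (auto intro!: polyC.add polyC.mul polyC_const)
qed

lemma Dmulti_sum: "finite S \<Longrightarrow> (\<And>\<alpha>. \<alpha> \<in> S \<Longrightarrow> polyC n (f \<alpha>)) \<Longrightarrow>
  Dmulti n \<beta> (\<lambda>x. \<Sum>\<alpha>\<in>S. c \<alpha> * f \<alpha> x) = (\<lambda>x. \<Sum>\<alpha>\<in>S. c \<alpha> * Dmulti n \<beta> (f \<alpha>) x)"
proof (induction S rule: finite_induct)
  case empty
  then show ?case by (simp add: Dmulti_zero)
next
  case (insert a S)
  have ps: "polyC n (\<lambda>x. \<Sum>\<alpha>\<in>S. c \<alpha> * f \<alpha> x)" using insert by (intro polyC_sum) auto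
  have "Dmulti n \<beta> (\<lambda>x. \<Sum>\<alpha>\<in>insert a S. c \<alpha> * f \<alpha> x) = Dmulti n \<beta> (\<lambda>x. c a * f a x + 1 * (\<Sum>\<alpha>\<in>S. c \<alpha> * f \<alpha> x))"
    using insert by simp
  also have "\<dots> = (\<lambda>x. c a * Dmulti n \<beta> (f a) x + 1 * Dmulti n \<beta> (\<lambda>x. \<Sum>\<alpha>\<in>S. c \<alpha> * f \<alpha> x) x)"
    using insert ps by (intro Dmulti_lin) auto
  finally show ?case using insert by simp
qed

lemma partial_iter_comm: assumes u: "polyC n u" shows "partial d ((partial e ^^ k) u) = (partial e ^^ k) (partial d u)"
proof (induction k)
  case (Suc k)
  have "partial d (partial e ((partial e ^^ k) u)) = partial e (partial d ((partial e ^^ k) u))"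
    by (rule partial_comm[OF polyC_iter[OF u]])
  then show ?case using Suc.IH by simp
qed simp

lemma partial_foldr: assumes u: "polyC n u" shows "
  partial d (foldr (\<lambda>d f. (partial d ^^ \<beta> d) f) ds u) = foldr (\<lambda>d f. (partial d ^^ \<beta> d) f) ds (partial d u)"
  by (induction ds) (simp_all add: partial_iter_comm[OF polyC_foldr[OF u]])

lemma Dmulti_shift:
  assumes u: "polyC n u" and d: "d < n"
  shows "Dmulti n \<beta> (partial d u) = Dmulti n (\<beta>(d := Suc (\<beta> d))) u"
proof -
  have L: "[0..<n] = [0..<d] @ d # [Suc d..<n]"
    using upt_add_eq_append[of 0 d "n-d"] upt_conv_Cons[of d n] d by simp
  let ?F = "\<lambda>d f. (partial d ^^ \<beta> d) f"
  let ?G = "\<lambda>da f. (partial da ^^ (\<beta>(d := Suc (\<beta> d))) da) f"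
  have c1: "foldr (\<lambda>da f. (partial da ^^ (if da = d then Suc (\<beta> d) else \<beta> da)) f) [0..<d] g = foldr ?F [0..<d] g" for g by (rule foldr_cong) auto
  have c2: "foldr (\<lambda>da f. (partial da ^^ (if da = d then Suc (\<beta> d) else \<beta> da)) f) [Suc d..<n] g = foldr ?F [Suc d..<n] g" for g by (rule foldr_cong) auto
  have "Dmulti n (\<beta>(d := Suc (\<beta> d))) u = foldr ?F [0..<d] (partial d ((partial d ^^ \<beta> d) (foldr ?F [Suc d..<n] u)))"
    unfolding Dmulti_def L by (simp add: c1 c2)
  also have "\<dots> = foldr ?F [0..<d] ((partial d ^^ \<beta> d) (foldr ?F [Suc d..<n] (partial d u)))"
    by (simp only: partial_iter_comm[OF polyC_foldr[OF u]] partial_foldr[OF u])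
  also have "\<dots> = Dmulti n \<beta> (partial d u)"
    unfolding Dmulti_def L by simp
  finally show ?thesis by simp
qed

lemma Dmulti_0: "Dmulti n (\<lambda>_. 0) u = u"
proof -
  have "foldr (\<lambda>d f. (partial d ^^ (\<lambda>_. 0::nat) d) f) ds u = u" for ds
    by (induction ds) auto
  then show ?thesis unfolding Dmulti_def .
qed

definition Ed :: "nat \<Rightarrow> (nat \<Rightarrow> real) \<Rightarrow> ((nat \<Rightarrow> real) \<Rightarrow> real) \<Rightarrow> (nat \<Rightarrow> real) \<Rightarrow> real" where
  "Ed n w u = (\<lambda>x. \<Sum>d<n. w d * partial d u x)"

primrec Eit :: "nat \<Rightarrow> (nat \<Rightarrow> real) list \<Rightarrow> ((nat \<Rightarrow> real) \<Rightarrow> real) \<Rightarrow> (nat \<Rightarrow> real) \<Rightarrow> real" where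
  "Eit n [] u = u"
| "Eit n (w # ws) u = Eit n ws (Ed n w u)"

lemma polyC_Ed: "polyC n u \<Longrightarrow> polyC n (Ed n w u)"
  unfolding Ed_def by (rule polyC_sum) (auto intro: polyC_partial)

lemma Dmulti_Ed: "polyC n u \<Longrightarrow> Dmulti n \<beta> (Ed n w u) = (\<lambda>x. \<Sum>d<n. w d * Dmulti n (\<beta>(d := Suc (\<beta> d))) u x)"
  unfolding Ed_def by (subst Dmulti_sum) (auto intro: polyC_partial simp: Dmulti_shift)

lemma Bset_shift: assumes "\<beta> \<in> Bset n r" "d < n" shows "\<beta>(d := Suc (\<beta> d)) \<in> Bset n (Suc r)"
proof -
  have "(\<Sum>d'<n. (\<beta>(d := Suc (\<beta> d))) d') = (\<Sum>d'<n. \<beta> d' + (if d' = d then 1 else 0))"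
    by (rule sum.cong) auto
  also have "\<dots> = (\<Sum>d'<n. \<beta> d') + 1" using assms(2) by (simp add: sum.distrib)
  finally show ?thesis using assms by (auto simp: Bset_def)
qed

lemma Eit_vanish:
  "polyC n u \<Longrightarrow> (\<forall>\<beta>\<in>Bset n r. Dmulti n \<beta> u p = 0) \<Longrightarrow> length ws \<le> r \<Longrightarrow> Eit n ws u p = 0"
proof (induction ws arbitrary: u r)
  case Nil
  have "(\<lambda>_. 0) \<in> Bset n r" by (simp add: Bset_def)
  then show ?case using Nil Dmulti_0[of n u] by force
next
  case (Cons w ws)
  then obtain r' where r: "r = Suc r'" by (cases r) auto
  have "\<forall>\<beta>\<in>Bset n r'. Dmulti n \<beta> (Ed n w u) p = 0"
    using Cons.prems Bset_shift r by (auto simp: Dmulti_Ed)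
  then show ?case using Cons.IH[of "Ed n w u" r'] Cons.prems r polyC_Ed by auto
qed

lemma op_sum:
  assumes lin: "\<And>u w a b. polyC n u \<Longrightarrow> polyC n w \<Longrightarrow> T (\<lambda>x. a * u x + b * w x) = (\<lambda>x. a * T u x + b * T w x)"
  shows "finite S \<Longrightarrow> (\<And>\<alpha>. \<alpha> \<in> S \<Longrightarrow> polyC n (f \<alpha>)) \<Longrightarrow>
    T (\<lambda>x. \<Sum>\<alpha>\<in>S. c \<alpha> * f \<alpha> x) = (\<lambda>x. \<Sum>\<alpha>\<in>S. c \<alpha> * T (f \<alpha>) x)"
proof (induction S rule: finite_induct)
  case empty
  have "T (\<lambda>x. 0 * 0 + 0 * 0) = (\<lambda>x. 0 * T (\<lambda>x. 0) x + 0 * T (\<lambda>x. 0) x)"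
    by (rule lin[OF polyC_const polyC_const])
  then show ?case by simp
next
  case (insert a S)
  have ps: "polyC n (\<lambda>x. \<Sum>\<alpha>\<in>S. c \<alpha> * f \<alpha> x)" using insert by (intro polyC_sum) auto
  have "T (\<lambda>x. \<Sum>\<alpha>\<in>insert a S. c \<alpha> * f \<alpha> x) = T (\<lambda>x. c a * f a x + 1 * (\<Sum>\<alpha>\<in>S. c \<alpha> * f \<alpha> x))"
    using insert by simp
  also have "\<dots> = (\<lambda>x. c a * T (f a) x + 1 * T (\<lambda>x. \<Sum>\<alpha>\<in>S. c \<alpha> * f \<alpha> x) x)"
    using insert ps by (intro lin) auto
  finally show ?case using insert by simp
qed

lemma polyC_bary: assumes s: "simplex_vertices n v" shows "polyC n (\<lambda>x. bary n v j x)"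
proof -
  have "(\<lambda>x. bary n v j x) = (\<lambda>x. bA n v j + (\<Sum>d<n. bB n v j d * x d))"
    using bary_affine[OF s] by auto
  then show ?thesis using polyC.aff by simp
qed

lemma polyC_pow: "polyC n u \<Longrightarrow> polyC n (\<lambda>x. u x ^ a)"
proof (induction a)
  case 0 then show ?case using polyC_const by simp
next
  case (Suc a) then show ?case using polyC.mul[of n u "\<lambda>x. u x ^ a"] by simp
qed

lemma polyC_prod: "finite L \<Longrightarrow> (\<And>l. l \<in> L \<Longrightarrow> polyC n (g l)) \<Longrightarrow> polyC n (\<lambda>x. \<Prod>l\<in>L. g l x)"
proof (induction L rule: finite_induct)
  case empty then show ?case using polyC_const by simp
next
  case (insert a L) then show ?case using polyC.mul[of n "g a" "\<lambda>x. \<Prod>l\<in>L. g l x"] by simp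
qed

lemma mono_eq: "bary_monomial n v \<alpha> = (\<lambda>x. \<Prod>j\<le>n. bary n v j x ^ \<alpha> j)"
  by (simp add: fun_eq_iff bary_monomial_def)

lemma polyC_mono: assumes s: "simplex_vertices n v" shows "polyC n (bary_monomial n v \<alpha>)"
  unfolding mono_eq by (intro polyC_prod polyC_pow polyC_bary[OF s]) auto

lemma Ed_lin: "polyC n u \<Longrightarrow> polyC n w \<Longrightarrow>
  Ed n w0 (\<lambda>x. a * u x + b * w x) = (\<lambda>x. a * Ed n w0 u x + b * Ed n w0 w x)"
  unfolding Ed_def
  by (simp add: partial_lin sum.distrib sum_distrib_left algebra_simps)

lemma Ed_add: "polyC n u \<Longrightarrow> polyC n w \<Longrightarrow>
  Ed n w0 (\<lambda>x. u x + w x) = (\<lambda>x. Ed n w0 u x + Ed n w0 w x)"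
  using Ed_lin[of n u w w0 1 1] by simp

lemma Ed_mul: "polyC n u \<Longrightarrow> polyC n w \<Longrightarrow>
  Ed n w0 (\<lambda>x. u x * w x) = (\<lambda>x. Ed n w0 u x * w x + u x * Ed n w0 w x)"
  unfolding Ed_def
  by (simp add: partial_mul sum.distrib sum_distrib_left sum_distrib_right algebra_simps)

lemma Ed_const: "Ed n w0 (\<lambda>x. a) = (\<lambda>x. 0)"
  unfolding Ed_def by (simp add: partial_const)

lemma Ed_pow: assumes u: "polyC n u"
  shows "Ed n w0 (\<lambda>x. u x ^ a) = (\<lambda>x. of_nat a * u x ^ (a - 1) * Ed n w0 u x)"
proof (induction a)
  case 0 then show ?case by (simp add: Ed_const)
next
  case (Suc a)
  have "Ed n w0 (\<lambda>x. u x ^ Suc a) = Ed n w0 (\<lambda>x. u x * u x ^ a)" by simp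
  also have "\<dots> = (\<lambda>x. Ed n w0 u x * u x ^ a + u x * Ed n w0 (\<lambda>x. u x ^ a) x)"
    by (rule Ed_mul[OF u polyC_pow[OF u]])
  also have "\<dots> = (\<lambda>x. of_nat (Suc a) * u x ^ (Suc a - 1) * Ed n w0 u x)"
    unfolding Suc.IH by (cases a) (auto simp: algebra_simps)
  finally show ?case .
qed

lemma Ed_prod: "finite L \<Longrightarrow> (\<And>l. l \<in> L \<Longrightarrow> polyC n (g l)) \<Longrightarrow>
  Ed n w0 (\<lambda>x. \<Prod>l\<in>L. g l x) = (\<lambda>x. \<Sum>l\<in>L. Ed n w0 (g l) x * (\<Prod>l'\<in>L - {l}. g l' x))"
proof (induction L rule: finite_induct)
  case empty then show ?case by (simp add: Ed_const)
next
  case (insert a L)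
  have pa: "polyC n (g a)" and pL: "polyC n (\<lambda>x. \<Prod>l\<in>L. g l x)"
    using insert by (auto intro!: polyC_prod)
  have "Ed n w0 (\<lambda>x. \<Prod>l\<in>insert a L. g l x) = Ed n w0 (\<lambda>x. g a x * (\<Prod>l\<in>L. g l x))"
    using insert by simp
  also have "\<dots> = (\<lambda>x. Ed n w0 (g a) x * (\<Prod>l\<in>L. g l x) + g a x * Ed n w0 (\<lambda>x. \<Prod>l\<in>L. g l x) x)"
    by (rule Ed_mul[OF pa pL])
  also have "\<dots> = (\<lambda>x. \<Sum>l\<in>insert a L. Ed n w0 (g l) x * (\<Prod>l'\<in>insert a L - {l}. g l' x))"
  proof
    fix x
    have e1: "insert a L - {a} = L" using insert by auto
    have e2: "(\<Prod>l'\<in>insert a L - {l}. g l' x) = g a x * (\<Prod>l'\<in>L - {l}. g l' x)" if "l \<in> L" for l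
    proof -
      have "insert a L - {l} = insert a (L - {l})" using that insert by auto
      then show ?thesis using insert by simp
    qed
    have "(\<Sum>l\<in>insert a L. Ed n w0 (g l) x * (\<Prod>l'\<in>insert a L - {l}. g l' x)) =
        Ed n w0 (g a) x * (\<Prod>l\<in>L. g l x) + (\<Sum>l\<in>L. Ed n w0 (g l) x * (\<Prod>l'\<in>insert a L - {l}. g l' x))"
      using insert e1 by simp
    also have "(\<Sum>l\<in>L. Ed n w0 (g l) x * (\<Prod>l'\<in>insert a L - {l}. g l' x)) = g a x * (\<Sum>l\<in>L. Ed n w0 (g l) x * (\<Prod>l'\<in>L - {l}. g l' x))"
      by (simp add: e2 sum_distrib_left algebra_simps cong: sum.cong)
    finally show "Ed n w0 (g a) x * (\<Prod>l\<in>L. g l x) + g a x * Ed n w0 (\<lambda>x. \<Prod>l\<in>L. g l x) x =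
        (\<Sum>l\<in>insert a L. Ed n w0 (g l) x * (\<Prod>l'\<in>insert a L - {l}. g l' x))"
      using insert by simp
  qed
  finally show ?case .
qed

definition W :: "(nat \<Rightarrow> nat \<Rightarrow> real) \<Rightarrow> nat \<Rightarrow> nat \<Rightarrow> nat \<Rightarrow> real" where
  "W v i j = (\<lambda>d. v j d - v i d)"

lemma Ed_bary:
  assumes s: "simplex_vertices n v" and i: "i \<le> n" and j: "j \<le> n"
  shows "Ed n (W v i j) (\<lambda>x. bary n v l x) = (\<lambda>x. (if l = j then 1 else 0) - (if l = i then 1 else 0))"
proof -
  have e: "(\<lambda>x. bary n v l x) = (\<lambda>x. bA n v l + (\<Sum>d<n. bB n v l d * x d))"
    using bary_affine[OF s] by auto
  have "Ed n (W v i j) (\<lambda>x. bary n v l x) = (\<lambda>x. \<Sum>d<n. W v i j d * bB n v l d)"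
    unfolding e Ed_def partial_aff by simp
  also have "(\<Sum>d<n. W v i j d * bB n v l d) = bary n v l (v j) - bary n v l (v i)"
    unfolding bary_affine[OF s, of l "v j"] bary_affine[OF s, of l "v i"]
    by (simp add: W_def sum_subtractf algebra_simps)
  also have "\<dots> = (if l = j then 1 else 0) - (if l = i then 1 else 0)"
    using bary_vertex[OF s i] bary_vertex[OF s j] by simp
  finally show ?thesis .
qed

lemma mono_split:
  assumes l: "l \<le> n"
  shows "bary_monomial n v (\<alpha>(l := a)) x = bary n v l x ^ a * (\<Prod>l'\<in>{..n} - {l}. bary n v l' x ^ \<alpha> l')"
proof -
  have "bary_monomial n v (\<alpha>(l := a)) x = bary n v l x ^ a * (\<Prod>l'\<in>{..n} - {l}. bary n v l' x ^ (\<alpha>(l := a)) l')"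
    unfolding bary_monomial_def using l by (subst prod.remove[of _ l]) auto
  also have "(\<Prod>l'\<in>{..n} - {l}. bary n v l' x ^ (\<alpha>(l := a)) l') = (\<Prod>l'\<in>{..n} - {l}. bary n v l' x ^ \<alpha> l')"
    by (rule prod.cong) auto
  finally show ?thesis .
qed

lemma Ed_mono:
  assumes s: "simplex_vertices n v" and i: "i \<le> n" and j: "j \<le> n" and ji: "j \<noteq> i"
  shows "Ed n (W v i j) (bary_monomial n v \<alpha>) =
    (\<lambda>x. real (\<alpha> j) * bary_monomial n v (\<alpha>(j := \<alpha> j - 1)) x - real (\<alpha> i) * bary_monomial n v (\<alpha>(i := \<alpha> i - 1)) x)"
proof
  fix x
  define T where "T l = real (\<alpha> l) * bary n v l x ^ (\<alpha> l - 1) * (\<Prod>l'\<in>{..n} - {l}. bary n v l' x ^ \<alpha> l')" for l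
  have "Ed n (W v i j) (bary_monomial n v \<alpha>) x =
      (\<Sum>l\<le>n. Ed n (W v i j) (\<lambda>x. bary n v l x ^ \<alpha> l) x * (\<Prod>l'\<in>{..n} - {l}. bary n v l' x ^ \<alpha> l'))"
    unfolding mono_eq by (subst Ed_prod) (auto intro!: polyC_pow polyC_bary[OF s])
  also have "\<dots> = (\<Sum>l\<le>n. (if l = j then T l else 0) - (if l = i then T l else 0))"
    by (rule sum.cong) (auto simp: Ed_pow[OF polyC_bary[OF s]] Ed_bary[OF s i j] T_def ji)
  also have "\<dots> = T j - T i" using i j by (simp add: sum_subtractf)
  also have "\<dots> = real (\<alpha> j) * bary_monomial n v (\<alpha>(j := \<alpha> j - 1)) x - real (\<alpha> i) * bary_monomial n v (\<alpha>(i := \<alpha> i - 1)) x"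
    unfolding T_def mono_split[OF i] mono_split[OF j] by simp
  finally show "Ed n (W v i j) (bary_monomial n v \<alpha>) x = \<dots>" .
qed

lemma polyC_Eit: "polyC n u \<Longrightarrow> polyC n (Eit n ws u)"
  by (induction ws arbitrary: u) (auto simp: polyC_Ed)

lemma Eit_lin: "polyC n u \<Longrightarrow> polyC n w \<Longrightarrow>
  Eit n ws (\<lambda>x. a * u x + b * w x) = (\<lambda>x. a * Eit n ws u x + b * Eit n ws w x)"
proof (induction ws arbitrary: u w)
  case Nil then show ?case by simp
next
  case (Cons w0 ws)
  have "Eit n (w0 # ws) (\<lambda>x. a * u x + b * w x) = Eit n ws (\<lambda>x. a * Ed n w0 u x + b * Ed n w0 w x)"
    using Cons.prems by (simp add: Ed_lin)
  also have "\<dots> = (\<lambda>x. a * Eit n ws (Ed n w0 u) x + b * Eit n ws (Ed n w0 w) x)"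
    using Cons.prems by (intro Cons.IH polyC_Ed)
  finally show ?case by simp
qed

lemma Eit_mono_step:
  assumes s: "simplex_vertices n v" and i: "i \<le> n" and j: "j \<le> n" and ji: "j \<noteq> i"
  shows "Eit n (W v i j # ws) (bary_monomial n v \<alpha>) p =
    real (\<alpha> j) * Eit n ws (bary_monomial n v (\<alpha>(j := \<alpha> j - 1))) p - real (\<alpha> i) * Eit n ws (bary_monomial n v (\<alpha>(i := \<alpha> i - 1))) p"
proof -
  have "Eit n (W v i j # ws) (bary_monomial n v \<alpha>) =
      Eit n ws (\<lambda>x. real (\<alpha> j) * bary_monomial n v (\<alpha>(j := \<alpha> j - 1)) x + (- real (\<alpha> i)) * bary_monomial n v (\<alpha>(i := \<alpha> i - 1)) x)"
    by (simp add: Ed_mono[OF s i j ji])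
  also have "\<dots> = (\<lambda>x. real (\<alpha> j) * Eit n ws (bary_monomial n v (\<alpha>(j := \<alpha> j - 1))) x + (- real (\<alpha> i)) * Eit n ws (bary_monomial n v (\<alpha>(i := \<alpha> i - 1))) x)"
    by (intro Eit_lin polyC_mono[OF s])
  finally show ?thesis by simp
qed

lemma Eval_zero:
  assumes s: "simplex_vertices n v" and i: "i \<le> n"
  shows "(\<forall>j\<in>set js. j \<le> n \<and> j \<noteq> i) \<Longrightarrow> l \<le> n \<Longrightarrow> l \<noteq> i \<Longrightarrow> count (mset js) l < \<alpha> l \<Longrightarrow>
    Eit n (map (W v i) js) (bary_monomial n v \<alpha>) (v i) = 0"
proof (induction js arbitrary: \<alpha>)
  case Nil
  have "bary n v l (v i) ^ \<alpha> l = 0" using Nil bary_vertex[OF s i] by simp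
  then show ?case using Nil by (auto simp: bary_monomial_def intro!: prod_zero)
next
  case (Cons j js)
  have j: "j \<le> n" "j \<noteq> i" using Cons.prems by auto
  have z1: "Eit n (map (W v i) js) (bary_monomial n v (\<alpha>(j := \<alpha> j - 1))) (v i) = 0"
    using Cons.prems by (intro Cons.IH) (auto split: if_splits)
  have z2: "Eit n (map (W v i) js) (bary_monomial n v (\<alpha>(i := \<alpha> i - 1))) (v i) = 0"
    using Cons.prems by (intro Cons.IH) (auto split: if_splits)
  show ?case using Eit_mono_step[OF s i j] z1 z2 by simp
qed

lemma Eval_diag:
  assumes s: "simplex_vertices n v" and i: "i \<le> n"
  shows "(\<forall>j\<in>set js. j \<le> n \<and> j \<noteq> i) \<Longrightarrow> (\<forall>l\<in>{..n} - {i}. count (mset js) l = \<alpha> l) \<Longrightarrow>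
    Eit n (map (W v i) js) (bary_monomial n v \<alpha>) (v i) = (\<Prod>l\<in>{..n} - {i}. fact (\<alpha> l))"
proof (induction js arbitrary: \<alpha>)
  case Nil
  have "bary_monomial n v \<alpha> (v i) = 1"
    unfolding bary_monomial_def using Nil bary_vertex[OF s i] by (intro prod.neutral) auto
  moreover have "(\<Prod>l\<in>{..n} - {i}. fact (\<alpha> l) :: real) = 1"
    using Nil by (intro prod.neutral) auto
  ultimately show ?case by simp
next
  case (Cons j js)
  have j: "j \<le> n" "j \<noteq> i" using Cons.prems by auto
  have aj: "\<alpha> j = Suc (count (mset js) j)" using bspec[OF Cons.prems(2), of j] j by simp
  have z2: "Eit n (map (W v i) js) (bary_monomial n v (\<alpha>(i := \<alpha> i - 1))) (v i) = 0"
    using Cons.prems j aj by (intro Eval_zero[OF s i, of js j]) auto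
  have z1: "Eit n (map (W v i) js) (bary_monomial n v (\<alpha>(j := \<alpha> j - 1))) (v i) =
      (\<Prod>l\<in>{..n} - {i}. fact ((\<alpha>(j := \<alpha> j - 1)) l))"
    using Cons.prems aj by (intro Cons.IH) (auto split: if_splits)
  have jS: "j \<in> {..n} - {i}" using j by auto
  have "real (\<alpha> j) * (\<Prod>l\<in>{..n} - {i}. fact ((\<alpha>(j := \<alpha> j - 1)) l)) =
      real (\<alpha> j) * (fact (\<alpha> j - 1) * (\<Prod>l\<in>{..n} - {i} - {j}. fact ((\<alpha>(j := \<alpha> j - 1)) l)))"
    by (subst prod.remove[OF _ jS]) auto
  also have "(\<Prod>l\<in>{..n} - {i} - {j}. fact ((\<alpha>(j := \<alpha> j - 1)) l)) = (\<Prod>l\<in>{..n} - {i} - {j}. (fact (\<alpha> l) :: real))"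
    by (rule prod.cong) auto
  also have "real (\<alpha> j) * (fact (\<alpha> j - 1) * (\<Prod>l\<in>{..n} - {i} - {j}. (fact (\<alpha> l) :: real))) =
      fact (\<alpha> j) * (\<Prod>l\<in>{..n} - {i} - {j}. (fact (\<alpha> l) :: real))"
    using aj by (simp add: fact_reduce[of "\<alpha> j"])
  also have "\<dots> = (\<Prod>l\<in>{..n} - {i}. fact (\<alpha> l))"
    by (subst prod.remove[OF _ jS, of "\<lambda>l. fact (\<alpha> l)"]) auto
  finally show ?case using Eit_mono_step[OF s i j] z1 z2 by simp
qed

lemma finite_Tset: "finite (Tset n k)"
proof -
  have "Tset n k \<subseteq> (\<lambda>f j. if j \<le> n then f j else 0) ` ({..n} \<rightarrow>\<^sub>E {..k})"
  proof
    fix \<alpha> assume a: "\<alpha> \<in> Tset n k"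
    have le: "\<alpha> j \<le> k" if "j \<le> n" for j
    proof -
      have "\<alpha> j \<le> sum \<alpha> {..n}" by (rule member_le_sum) (use that in auto)
      then show ?thesis using a by (simp add: Tset_def)
    qed
    have "\<alpha> = (\<lambda>j. if j \<le> n then restrict \<alpha> {..n} j else 0)"
      using a by (auto simp: Tset_def fun_eq_iff)
    moreover have "restrict \<alpha> {..n} \<in> {..n} \<rightarrow>\<^sub>E {..k}" using le by auto
    ultimately show "\<alpha> \<in> (\<lambda>f j. if j \<le> n then f j else 0) ` ({..n} \<rightarrow>\<^sub>E {..k})" by blast
  qed
  then show ?thesis by (rule finite_subset) (intro finite_imageI finite_PiE, auto)
qed

lemma finite_Bset: "finite (Bset n m)"
proof -
  have "Bset n m \<subseteq> (\<lambda>f j. if j < n then f j else 0) ` ({..<n} \<rightarrow>\<^sub>E {..m})"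
  proof
    fix \<beta> assume a: "\<beta> \<in> Bset n m"
    have le: "\<beta> j \<le> m" if "j < n" for j
    proof -
      have "\<beta> j \<le> sum \<beta> {..<n}" by (rule member_le_sum) (use that in auto)
      then show ?thesis using a by (simp add: Bset_def)
    qed
    have "\<beta> = (\<lambda>j. if j < n then restrict \<beta> {..<n} j else 0)"
      using a by (auto simp: Bset_def fun_eq_iff)
    moreover have "restrict \<beta> {..<n} \<in> {..<n} \<rightarrow>\<^sub>E {..m}" using le by auto
    ultimately show "\<beta> \<in> (\<lambda>f j. if j < n then f j else 0) ` ({..<n} \<rightarrow>\<^sub>E {..m})" by blast
  qed
  then show ?thesis by (rule finite_subset) (intro finite_imageI finite_PiE, auto)
qed

lemma size_sum_rep: "finite A \<Longrightarrow> size (\<Sum>l\<in>A. replicate_mset (f l) l) = (\<Sum>l\<in>A. f l)"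
  by (induction A rule: finite_induct) auto

lemma Eit_sum:
  "finite S \<Longrightarrow> (\<And>\<alpha>. \<alpha> \<in> S \<Longrightarrow> polyC n (f \<alpha>)) \<Longrightarrow>
    Eit n ws (\<lambda>x. \<Sum>\<alpha>\<in>S. c \<alpha> * f \<alpha> x) = (\<lambda>x. \<Sum>\<alpha>\<in>S. c \<alpha> * Eit n ws (f \<alpha>) x)"
  by (rule op_sum[where T="Eit n ws"]) (auto intro: Eit_lin)

lemma Dmulti_sum': "finite S \<Longrightarrow> (\<And>\<alpha>. \<alpha> \<in> S \<Longrightarrow> polyC n (f \<alpha>)) \<Longrightarrow>
    Dmulti n \<beta> (\<lambda>x. \<Sum>\<alpha>\<in>S. c \<alpha> * f \<alpha> x) p = (\<Sum>\<alpha>\<in>S. c \<alpha> * Dmulti n \<beta> (f \<alpha>) p)"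
  using Dmulti_sum[of S n f \<beta> c] by simp

lemma coeff_zero:
  assumes s: "simplex_vertices n v" and i: "i \<le> n"
    and I_def: "I = {\<alpha>\<in>Tset n k. (\<Sum>j\<in>{..n}-{i}. \<alpha> j) \<le> m}"
    and van: "\<forall>\<beta>\<in>Bset n m. Dmulti n \<beta> (\<lambda>x. \<Sum>\<alpha>\<in>I. C \<alpha> * bary_monomial n v \<alpha> x) (v i) = 0"
  shows "\<forall>\<alpha>\<in>I. C \<alpha> = 0"
proof (rule ccontr)
  assume nz: "\<not> (\<forall>\<alpha>\<in>I. C \<alpha> = 0)"
  define u where "u = (\<lambda>x. \<Sum>\<alpha>\<in>I. C \<alpha> * bary_monomial n v \<alpha> x)"
  have fI: "finite I" using finite_Tset[of n k] unfolding I_def by (rule finite_subset[rotated]) auto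
  have pu: "polyC n u" unfolding u_def using fI by (intro polyC_sum polyC_mono[OF s])
  define sm where "sm \<alpha> = (\<Sum>j\<in>{..n}-{i}. \<alpha> j)" for \<alpha> :: "nat \<Rightarrow> nat"
  define S where "S = {\<alpha>\<in>I. C \<alpha> \<noteq> 0}"
  have fS: "finite S" using fI by (simp add: S_def)
  have Sne: "S \<noteq> {}" using nz by (auto simp: S_def)
  define r where "r = Min (sm ` S)"
  have "r \<in> sm ` S" unfolding r_def using fS Sne by (intro Min_in) auto
  then obtain a where aS: "a \<in> S" and ar: "sm a = r" by auto
  have amin: "sm a \<le> sm b" if "b \<in> S" for b
    unfolding ar r_def using fS that by (intro Min_le) auto
  have aI: "a \<in> I" and Ca: "C a \<noteq> 0" using aS by (auto simp: S_def)
  define M where "M = (\<Sum>l\<in>{..n}-{i}. replicate_mset (a l) l)"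
  obtain js where js: "mset js = M" using ex_mset by blast
  have cnt: "count (mset js) l = (if l \<in> {..n}-{i} then a l else 0)" for l
    unfolding js M_def count_sum by simp
  have setjs: "\<forall>j\<in>set js. j \<le> n \<and> j \<noteq> i"
  proof
    fix j assume "j \<in> set js"
    then have "count (mset js) j > 0" by simp
    then show "j \<le> n \<and> j \<noteq> i" using cnt[of j] by (auto split: if_splits)
  qed
  have "length js = size M" using js by (metis size_mset)
  also have "\<dots> = sm a" unfolding M_def sm_def by (simp add: size_sum_rep)
  also have "\<dots> \<le> m" using aI by (simp add: I_def sm_def)
  finally have len: "length js \<le> m" .
  have E0: "Eit n (map (W v i) js) u (v i) = 0"
    by (rule Eit_vanish[OF pu]) (use van len in \<open>auto simp: u_def\<close>)
  have Esum: "Eit n (map (W v i) js) u (v i) = (\<Sum>\<alpha>\<in>I. C \<alpha> * Eit n (map (W v i) js) (bary_monomial n v \<alpha>) (v i))"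
    unfolding u_def using fI by (subst Eit_sum) (auto intro: polyC_mono[OF s])
  have others: "C \<alpha> * Eit n (map (W v i) js) (bary_monomial n v \<alpha>) (v i) = 0" if \<alpha>I: "\<alpha> \<in> I" and ne: "\<alpha> \<noteq> a" for \<alpha>
  proof (cases "C \<alpha> = 0")
    case False
    then have "\<alpha> \<in> S" using \<alpha>I by (simp add: S_def)
    then have le: "sm a \<le> sm \<alpha>" by (rule amin)
    show ?thesis
    proof (cases "\<exists>l\<in>{..n}-{i}. count (mset js) l < \<alpha> l")
      case True
      then obtain l where "l \<le> n" "l \<noteq> i" "count (mset js) l < \<alpha> l" by auto
      then show ?thesis using Eval_zero[OF s i setjs] by simp
    next
      case False
      then have ge: "\<forall>l\<in>{..n}-{i}. \<alpha> l \<le> a l" using cnt by (auto simp: not_less)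
      have eq: "\<forall>l\<in>{..n}-{i}. \<alpha> l = a l"
      proof (rule ccontr)
        assume "\<not> (\<forall>l\<in>{..n}-{i}. \<alpha> l = a l)"
        then obtain l where l: "l \<in> {..n}-{i}" "\<alpha> l \<noteq> a l" by blast
        have "\<alpha> l \<le> a l" using ge l(1) by blast
        then have "\<alpha> l < a l" using l(2) by simp
        then have "\<exists>l\<in>{..n}-{i}. \<alpha> l < a l" using l(1) by blast
        then have "sm \<alpha> < sm a" unfolding sm_def using ge by (intro sum_strict_mono_ex1) auto
        then show False using le by simp
      qed
      have smeq: "sm \<alpha> = sm a" unfolding sm_def using eq by (intro sum.cong) auto
      have tot: "\<beta> i + sm \<beta> = k" if "\<beta> \<in> I" for \<beta>
      proof -
        have "sum \<beta> {..n} = \<beta> i + sm \<beta>" unfolding sm_def using i by (subst sum.remove[of _ i]) auto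
        then show ?thesis using that by (simp add: I_def Tset_def)
      qed
      have "\<alpha> = a"
      proof
        fix j
        show "\<alpha> j = a j"
        proof (cases "j \<le> n")
          case False then show ?thesis using \<alpha>I aI by (simp add: I_def Tset_def)
        next
          case True
          show ?thesis
          proof (cases "j = i")
            case True then show ?thesis using tot[OF \<alpha>I] tot[OF aI] smeq by simp
          next
            case False then show ?thesis using eq \<open>j \<le> n\<close> by auto
          qed
        qed
      qed
      then show ?thesis using ne by simp
    qed
  qed simp
  have diag: "Eit n (map (W v i) js) (bary_monomial n v a) (v i) = (\<Prod>l\<in>{..n} - {i}. fact (a l))"
    using cnt by (intro Eval_diag[OF s i setjs]) auto
  have "(\<Sum>\<alpha>\<in>I. C \<alpha> * Eit n (map (W v i) js) (bary_monomial n v \<alpha>) (v i)) =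
      C a * Eit n (map (W v i) js) (bary_monomial n v a) (v i) + (\<Sum>\<alpha>\<in>I - {a}. C \<alpha> * Eit n (map (W v i) js) (bary_monomial n v \<alpha>) (v i))"
    using fI aI by (subst sum.remove[of _ a]) auto
  also have "(\<Sum>\<alpha>\<in>I - {a}. C \<alpha> * Eit n (map (W v i) js) (bary_monomial n v \<alpha>) (v i)) = 0"
    using others by (intro sum.neutral) auto
  finally have "Eit n (map (W v i) js) u (v i) = C a * (\<Prod>l\<in>{..n} - {i}. fact (a l))"
    using Esum diag by simp
  moreover have "(\<Prod>l\<in>{..n} - {i}. fact (a l) :: real) \<noteq> 0" by simp
  ultimately show False using E0 Ca by simp
qed

definition sig :: "nat \<Rightarrow> nat \<Rightarrow> nat" where "sig i d = (if d < i then d else Suc d)"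

lemma sig_bij: assumes i: "i \<le> n" shows "bij_betw (sig i) {..<n} ({..n} - {i})"
proof (rule bij_betw_imageI)
  show "inj_on (sig i) {..<n}" by (auto simp: inj_on_def sig_def split: if_splits)
  show "sig i ` {..<n} = {..n} - {i}"
  proof
    show "sig i ` {..<n} \<subseteq> {..n} - {i}" by (auto simp: sig_def)
    show "{..n} - {i} \<subseteq> sig i ` {..<n}"
    proof
      fix j assume j: "j \<in> {..n} - {i}"
      show "j \<in> sig i ` {..<n}"
      proof (cases "j < i")
        case True then show ?thesis using i by (intro image_eqI[of _ _ j]) (auto simp: sig_def)
      next
        case False then show ?thesis using j by (intro image_eqI[of _ _ "j - 1"]) (auto simp: sig_def)
      qed
    qed
  qed
qed

lemma sum_sig: assumes i: "i \<le> n" shows "(\<Sum>j\<in>{..n}-{i}. \<alpha> j) = (\<Sum>d<n. \<alpha> (sig i d))"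
  using sum.reindex_bij_betw[OF sig_bij[OF i], of \<alpha>] by simp

definition phi :: "nat \<Rightarrow> nat \<Rightarrow> nat \<Rightarrow> (nat \<Rightarrow> nat) \<Rightarrow> nat \<Rightarrow> nat" where
  "phi n k i \<beta> = (\<lambda>j. if j \<le> n then (if j = i then k - (\<Sum>d<n. \<beta> d) else \<beta> (if j < i then j else j - 1)) else 0)"

definition psi :: "nat \<Rightarrow> nat \<Rightarrow> (nat \<Rightarrow> nat) \<Rightarrow> nat \<Rightarrow> nat" where
  "psi n i \<alpha> = (\<lambda>d. if d < n then \<alpha> (sig i d) else 0)"

lemma phi_sig: "d < n \<Longrightarrow> i \<le> n \<Longrightarrow> phi n k i \<beta> (sig i d) = \<beta> d"
  by (auto simp: phi_def sig_def)

lemma phi_bij: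
  assumes i: "i \<le> n" and k: "m \<le> k"
  shows "bij_betw (phi n k i) (Bset n m) {\<alpha>\<in>Tset n k. (\<Sum>j\<in>{..n}-{i}. \<alpha> j) \<le> m}"
proof (rule bij_betw_byWitness[where f'="psi n i"])
  have smphi: "(\<Sum>j\<in>{..n}-{i}. phi n k i \<beta> j) = (\<Sum>d<n. \<beta> d)" for \<beta>
    unfolding sum_sig[OF i] using i by (intro sum.cong) (auto simp: phi_sig)
  have tot: "sum \<alpha> {..n} = \<alpha> i + (\<Sum>j\<in>{..n}-{i}. \<alpha> j)" for \<alpha> :: "nat \<Rightarrow> nat"
    using i by (subst sum.remove[of _ i]) auto
  show "\<forall>\<beta>\<in>Bset n m. psi n i (phi n k i \<beta>) = \<beta>"
    using i by (auto simp: psi_def phi_sig fun_eq_iff Bset_def)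
  show "\<forall>\<alpha>\<in>{\<alpha>\<in>Tset n k. (\<Sum>j\<in>{..n}-{i}. \<alpha> j) \<le> m}. phi n k i (psi n i \<alpha>) = \<alpha>"
  proof (intro ballI ext)
    fix \<alpha> j assume a: "\<alpha> \<in> {\<alpha>\<in>Tset n k. (\<Sum>j\<in>{..n}-{i}. \<alpha> j) \<le> m}"
    have s1: "(\<Sum>d<n. psi n i \<alpha> d) = (\<Sum>j\<in>{..n}-{i}. \<alpha> j)"
      unfolding sum_sig[OF i] by (simp add: psi_def)
    show "phi n k i (psi n i \<alpha>) j = \<alpha> j"
    proof (cases "j \<le> n")
      case False then show ?thesis using a by (simp add: phi_def Tset_def)
    next
      case jn: True
      show ?thesis
      proof (cases "j = i")
        case True
        have "\<alpha> i + (\<Sum>j\<in>{..n}-{i}. \<alpha> j) = k" using a tot[of \<alpha>] by (simp add: Tset_def)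
        then show ?thesis using True jn s1 by (simp add: phi_def)
      next
        case False
        then show ?thesis using jn i by (auto simp: phi_def psi_def sig_def)
      qed
    qed
  qed
  show "phi n k i ` Bset n m \<subseteq> {\<alpha>\<in>Tset n k. (\<Sum>j\<in>{..n}-{i}. \<alpha> j) \<le> m}"
  proof
    fix \<alpha> assume "\<alpha> \<in> phi n k i ` Bset n m"
    then obtain \<beta> where b: "\<beta> \<in> Bset n m" and ab: "\<alpha> = phi n k i \<beta>" by auto
    have sb: "(\<Sum>d<n. \<beta> d) \<le> m" using b by (simp add: Bset_def)
    have "sum \<alpha> {..n} = k"
      unfolding tot ab smphi using sb k i by (simp add: phi_def)
    then show "\<alpha> \<in> {\<alpha>\<in>Tset n k. (\<Sum>j\<in>{..n}-{i}. \<alpha> j) \<le> m}"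
      using ab smphi sb by (auto simp: Tset_def phi_def)
  qed
  show "psi n i ` {\<alpha>\<in>Tset n k. (\<Sum>j\<in>{..n}-{i}. \<alpha> j) \<le> m} \<subseteq> Bset n m"
  proof
    fix \<beta> assume "\<beta> \<in> psi n i ` {\<alpha>\<in>Tset n k. (\<Sum>j\<in>{..n}-{i}. \<alpha> j) \<le> m}"
    then obtain \<alpha> where a: "\<alpha> \<in> {\<alpha>\<in>Tset n k. (\<Sum>j\<in>{..n}-{i}. \<alpha> j) \<le> m}" and ba: "\<beta> = psi n i \<alpha>" by auto
    have "(\<Sum>d<n. \<beta> d) = (\<Sum>j\<in>{..n}-{i}. \<alpha> j)"
      unfolding ba sum_sig[OF i] by (simp add: psi_def)
    then show "\<beta> \<in> Bset n m" using a ba by (auto simp: Bset_def psi_def)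
  qed
qed

theorem mainTheorem11:
  fixes n m k i :: nat and v :: "nat \<Rightarrow> nat \<Rightarrow> real"
  assumes "simplex_vertices n v"
    and "k \<ge> 2 * m + 1"
    and "i \<le> n"
  shows "bij_betw (\<lambda>u. \<lambda>\<beta>\<in>Bset n m. Dmulti n \<beta> u (v i))
           (PkD n v k i m) (Bset n m \<rightarrow>\<^sub>E (UNIV :: real set))"
proof -
  have s: "simplex_vertices n v" and i: "i \<le> n" and km: "m \<le> k" using assms by auto
  define I where "I = {\<alpha>\<in>Tset n k. (\<Sum>j\<in>{..n}-{i}. \<alpha> j) \<le> m}"
  have fI: "finite I" using finite_Tset[of n k] unfolding I_def by (rule finite_subset[rotated]) auto
  have pm: "polyC n (bary_monomial n v \<alpha>)" for \<alpha> by (rule polyC_mono[OF s])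
  have PkD_eq: "PkD n v k i m = {u. \<exists>c. u = (\<lambda>x. \<Sum>\<alpha>\<in>I. c \<alpha> * bary_monomial n v \<alpha> x)}"
    unfolding PkD_def I_def ..
  let ?J = "\<lambda>u. \<lambda>\<beta>\<in>Bset n m. Dmulti n \<beta> u (v i)"
  have Dsum: "Dmulti n \<beta> (\<lambda>x. \<Sum>\<alpha>\<in>I. c \<alpha> * bary_monomial n v \<alpha> x) (v i) =
      (\<Sum>\<alpha>\<in>I. c \<alpha> * Dmulti n \<beta> (bary_monomial n v \<alpha>) (v i))" for c \<beta>
    by (rule Dmulti_sum'[OF fI pm])
  have inj: "inj_on ?J (PkD n v k i m)"
  proof (rule inj_onI)
    fix u1 u2 assume u1: "u1 \<in> PkD n v k i m" and u2: "u2 \<in> PkD n v k i m" and eq: "?J u1 = ?J u2"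
    obtain c1 where c1: "u1 = (\<lambda>x. \<Sum>\<alpha>\<in>I. c1 \<alpha> * bary_monomial n v \<alpha> x)" using u1 unfolding PkD_eq by auto
    obtain c2 where c2: "u2 = (\<lambda>x. \<Sum>\<alpha>\<in>I. c2 \<alpha> * bary_monomial n v \<alpha> x)" using u2 unfolding PkD_eq by auto
    have "\<forall>\<beta>\<in>Bset n m. Dmulti n \<beta> (\<lambda>x. \<Sum>\<alpha>\<in>I. (c1 \<alpha> - c2 \<alpha>) * bary_monomial n v \<alpha> x) (v i) = 0"
    proof
      fix \<beta> assume b: "\<beta> \<in> Bset n m"
      have "Dmulti n \<beta> u1 (v i) = Dmulti n \<beta> u2 (v i)" using fun_cong[OF eq, of \<beta>] b by simp
      then show "Dmulti n \<beta> (\<lambda>x. \<Sum>\<alpha>\<in>I. (c1 \<alpha> - c2 \<alpha>) * bary_monomial n v \<alpha> x) (v i) = 0"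
        unfolding Dsum using Dsum[where c=c1 and \<beta>=\<beta>] Dsum[where c=c2 and \<beta>=\<beta>] c1 c2
        by (simp add: left_diff_distrib sum_subtractf)
    qed
    then have "\<forall>\<alpha>\<in>I. c1 \<alpha> - c2 \<alpha> = 0" by (rule coeff_zero[OF s i I_def])
    then show "u1 = u2" unfolding c1 c2 by (intro ext sum.cong) auto
  qed
  have sub: "Bset n m \<rightarrow>\<^sub>E (UNIV :: real set) \<subseteq> ?J ` PkD n v k i m"
  proof
    fix t :: "(nat \<Rightarrow> nat) \<Rightarrow> real" assume t: "t \<in> Bset n m \<rightarrow>\<^sub>E UNIV"
    define N where "N = card (Bset n m)"
    obtain eB where eB: "bij_betw eB {0..<N} (Bset n m)"
      using ex_bij_betw_nat_finite[OF finite_Bset] unfolding N_def by blast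
    define eI where "eI = phi n k i \<circ> eB"
    have eI: "bij_betw eI {0..<N} I"
      unfolding eI_def I_def by (rule bij_betw_trans[OF eB phi_bij[OF i km]])
    define A :: "real mat" where "A = mat N N (\<lambda>(r,s). Dmulti n (eB r) (bary_monomial n v (eI s)) (v i))"
    have A: "A \<in> carrier_mat N N" by (simp add: A_def)
    define Cf where "Cf c \<alpha> = c $ (inv_into {0..<N} eI \<alpha>)" for c :: "real vec" and \<alpha>
    have Cf: "Cf c (eI s) = c $ s" if "s < N" for c s
      unfolding Cf_def using that bij_betw_imp_inj_on[OF eI] by (simp add: inv_into_f_f)
    have key: "Dmulti n (eB r) (\<lambda>x. \<Sum>\<alpha>\<in>I. Cf c \<alpha> * bary_monomial n v \<alpha> x) (v i) = (A *\<^sub>v c) $ r"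
      if c: "c \<in> carrier_vec N" and r: "r < N" for c r
    proof -
      have "Dmulti n (eB r) (\<lambda>x. \<Sum>\<alpha>\<in>I. Cf c \<alpha> * bary_monomial n v \<alpha> x) (v i) =
          (\<Sum>\<alpha>\<in>I. Cf c \<alpha> * Dmulti n (eB r) (bary_monomial n v \<alpha>) (v i))" by (rule Dsum)
      also have "\<dots> = (\<Sum>s\<in>{0..<N}. Cf c (eI s) * Dmulti n (eB r) (bary_monomial n v (eI s)) (v i))"
        by (rule sum.reindex_bij_betw[OF eI, symmetric])
      also have "\<dots> = (\<Sum>s\<in>{0..<N}. A $$ (r, s) * c $ s)"
        using r by (intro sum.cong) (auto simp: Cf A_def)
      also have "\<dots> = (A *\<^sub>v c) $ r"
        using A c r by (simp add: scalar_prod_def)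
      finally show ?thesis .
    qed
    have eBr: "\<exists>r<N. \<beta> = eB r" if "\<beta> \<in> Bset n m" for \<beta>
      using that bij_betw_imp_surj_on[OF eB] by force
    have injA: "c = 0\<^sub>v N" if c: "c \<in> carrier_vec N" and z: "A *\<^sub>v c = 0\<^sub>v N" for c
    proof -
      have "\<forall>\<beta>\<in>Bset n m. Dmulti n \<beta> (\<lambda>x. \<Sum>\<alpha>\<in>I. Cf c \<alpha> * bary_monomial n v \<alpha> x) (v i) = 0"
      proof
        fix \<beta> assume "\<beta> \<in> Bset n m"
        then obtain r where r: "r < N" "\<beta> = eB r" using eBr by blast
        show "Dmulti n \<beta> (\<lambda>x. \<Sum>\<alpha>\<in>I. Cf c \<alpha> * bary_monomial n v \<alpha> x) (v i) = 0"
          using key[OF c r(1)] z r by simp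
      qed
      then have z2: "\<forall>\<alpha>\<in>I. Cf c \<alpha> = 0" by (rule coeff_zero[OF s i I_def])
      show ?thesis
      proof (rule eq_vecI)
        fix s assume "s < dim_vec (0\<^sub>v N :: real vec)"
        then have sN: "s < N" by simp
        have "eI s \<in> I" using bij_betw_apply[OF eI] sN by simp
        then show "c $ s = 0\<^sub>v N $ s" using z2 Cf[OF sN, of c] sN by simp
      qed (use c in simp)
    qed
    define b :: "real vec" where "b = vec N (\<lambda>r. t (eB r))"
    have b: "b \<in> carrier_vec N" by (simp add: b_def)
    obtain c where c: "c \<in> carrier_vec N" and cb: "A *\<^sub>v c = b" using solv[OF A injA b] by blast
    define u where "u = (\<lambda>x. \<Sum>\<alpha>\<in>I. Cf c \<alpha> * bary_monomial n v \<alpha> x)"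
    have uP: "u \<in> PkD n v k i m" unfolding PkD_eq u_def by blast
    have "?J u = t"
    proof
      fix \<beta>
      show "?J u \<beta> = t \<beta>"
      proof (cases "\<beta> \<in> Bset n m")
        case True
        then obtain r where r: "r < N" "\<beta> = eB r" using eBr by blast
        then show ?thesis using key[OF c r(1)] cb True unfolding u_def b_def by simp
      next
        case False
        then show ?thesis using t by (simp add: PiE_def extensional_def)
      qed
    qed
    then show "t \<in> ?J ` PkD n v k i m" using uP by blast
  qed
  have "?J ` PkD n v k i m \<subseteq> Bset n m \<rightarrow>\<^sub>E (UNIV :: real set)" by auto
  with sub have "?J ` PkD n v k i m = Bset n m \<rightarrow>\<^sub>E (UNIV :: real set)" by blast
  with inj show ?thesis unfolding bij_betw_def by blast
qed

end
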